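(* Define primes $p_i$, $i\geq 1$, recursively: $p_1=5$, and for $i>1$, $p_i$ is the smallest prime larger than $p_{i-1}$ that does not divide $|{}^2G_2(3^{p_j})|$ for any $1\leq j<i$. Set $q_i=3^{p_i}$, $R_i={}^2G_2(q_i)$, and for a positive integer $k$ let $P_k=R_1\times\cdots\times R_k$. Then for every $i\geq 1$: (a) $\pi(R_i)\cap\pi(R_j)=\{2,3,7\}$ for all $j\neq i$; (b) $p_i\notin\pi(R_j)$ for all $j$; in particular $5\notin\pi(R_j)$ for all $j$; (c) $\pi(q_i+1)\neq\{2\}$ and $\pi(q_i-1)\neq\{2\}$; $7$ divides one of $q_i-\sqrt{3q_i}+1$, $q_i+\sqrt{3q_i}+1$; and $\pi(q_i+\sqrt{3q_i}+1)\neq\{7\}$ and $\pi(q_i-\sqrt{3q_i}+1)\neq\{7\}$; (d) for every positive integer $k$ and every integer $m>3$ (with $3^m$ such that ${}^2G_2(3^m)$ is defined, i.e. $m$ odd), if $\pi({}^2G_2(3^m))\subseteq\pi(P_k)$, then $m\in\{p_1,\dots,p_k\}$.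
   Context: For a finite group $X$ (or positive integer $n$), $\pi(X)$ (resp. $\pi(n)$) denotes the set of prime divisors of $|X|$ (resp. $n$). ${}^2G_2(q)$, $q=3^\alpha$ with $\alpha$ odd, is the small Ree group, of order $q^3(q-1)(q^3+1)$. *)

theory Defs
  imports "HOL-Computational_Algebra.Primes"
begin

definition ree_order :: "nat \<Rightarrow> nat" where
  "ree_order q = q^3 * (q - 1) * (q^3 + 1)"

abbreviation prime_set :: "nat \<Rightarrow> nat set" where
  "prime_set n \<equiv> prime_factors n"

text \<open>plist n = [p_1, ..., p_(n+1)].\<close>
primrec plist :: "nat \<Rightarrow> nat list" where
  "plist 0 = [5]"
| "plist (Suc n) = plist n @
     [LEAST x. prime x \<and> x > last (plist n) \<and>
        (\<forall>y\<in>set (plist n). \<not> x dvd ree_order (3 ^ y))]"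

text \<open>p i for i >= 1 (p 0 is meaningless).\<close>
definition pp :: "nat \<Rightarrow> nat" where
  "pp i = plist (i - 1) ! (i - 1)"

definition qq :: "nat \<Rightarrow> nat" where
  "qq i = 3 ^ pp i"

text \<open>sqrt(3 q_i) = 3^((p_i+1)/2), p_i odd.\<close>
definition sq3q :: "nat \<Rightarrow> nat" where
  "sq3q i = 3 ^ ((pp i + 1) div 2)"

end

theory Submission
  imports Defs "HOL-Number_Theory.Number_Theory"
begin


lemma len_plist: "length (plist n) = Suc n" by (induct n) auto

lemma plist_prefix: "k \<le> n \<Longrightarrow> plist n ! k = plist k ! k"
proof (induct n)
  case 0 then show ?case by simp
next
  case (Suc n)
  show ?case
  proof (cases "k = Suc n")
    case False
    then have "k \<le> n" using Suc by simp
    then show ?thesis using Suc by (simp add: nth_append len_plist)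
  qed simp
qed

lemma ree_pos: "n \<ge> 1 \<Longrightarrow> ree_order (3^n) > 0"
proof -
  assume "n \<ge> 1"
  then have "(3::nat)^n \<ge> 3^1" by (intro power_increasing) auto
  then show ?thesis by (simp add: ree_order_def)
qed

lemma exists_next:
  assumes "\<forall>y\<in>set (plist n). y \<ge> 1"
  shows "\<exists>x. prime x \<and> x > last (plist n) \<and> (\<forall>y\<in>set (plist n). \<not> x dvd ree_order (3 ^ y))"
proof -
  define M where "M = (\<Prod>y\<in>set (plist n). ree_order (3^y))"
  obtain x where x: "prime x" "x > last (plist n) + M" using bigger_prime by blast
  have "\<not> x dvd ree_order (3 ^ y)" if y: "y \<in> set (plist n)" for y
  proof
    assume d: "x dvd ree_order (3 ^ y)"
    have pos: "ree_order (3^y) > 0" using ree_pos assms y by blast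
    have "ree_order (3^y) dvd M" unfolding M_def using y by (intro dvd_prodI) auto
    moreover have "M > 0" unfolding M_def using ree_pos assms by (intro prod_pos) auto
    ultimately have "ree_order (3^y) \<le> M" by (simp add: dvd_imp_le)
    moreover have "x \<le> ree_order (3^y)" using d pos by (simp add: dvd_imp_le)
    ultimately show False using x by simp
  qed
  then show ?thesis using x by auto
qed

lemma plist_inv: "\<forall>y\<in>set (plist n). prime y"
proof (induct n)
  case 0 then show ?case by simp
next
  case (Suc n)
  have "\<forall>y\<in>set (plist n). y \<ge> 1" using Suc prime_ge_1_nat by blast
  from LeastI_ex[OF exists_next[OF this]] Suc show ?case by simp
qed

lemma plist_step:
  "prime (last (plist (Suc n))) \<and> last (plist (Suc n)) > last (plist n) \<and>
   (\<forall>y\<in>set (plist n). \<not> last (plist (Suc n)) dvd ree_order (3 ^ y))"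
proof -
  have "\<forall>y\<in>set (plist n). y \<ge> 1" using plist_inv prime_ge_1_nat by blast
  from LeastI_ex[OF exists_next[OF this]] show ?thesis by simp
qed

lemma pp_Suc: "pp (Suc n) = last (plist n)"
proof -
  have "plist n \<noteq> []" using len_plist[of n] by auto
  then show ?thesis unfolding pp_def by (simp add: last_conv_nth len_plist)
qed

lemma pp_prime: "i \<ge> 1 \<Longrightarrow> prime (pp i)"
proof -
  assume "i \<ge> 1"
  then have "pp i \<in> set (plist (i-1))" unfolding pp_def by (simp add: len_plist)
  then show ?thesis using plist_inv by blast
qed

lemma pp_mem: "1 \<le> j \<Longrightarrow> j \<le> Suc n \<Longrightarrow> pp j \<in> set (plist n)"
proof -
  assume j: "1 \<le> j" "j \<le> Suc n"
  have "pp j = plist n ! (j - 1)" unfolding pp_def using j plist_prefix[of "j-1" n] by simp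
  then show ?thesis using j by (simp add: len_plist)
qed

lemma pp_inc: "pp (Suc (Suc n)) > pp (Suc n)"
  using plist_step[of n] by (simp add: pp_Suc)

lemma pp_1: "pp 1 = 5" unfolding pp_def by simp

lemma pp_mono: "1 \<le> j \<Longrightarrow> j < i \<Longrightarrow> pp j < pp i"
proof (induct i)
  case 0 then show ?case by simp
next
  case (Suc i)
  show ?case
  proof (cases "j = i")
    case True
    then obtain n where "i = Suc n" using Suc by (cases i) auto
    then show ?thesis using True pp_inc by simp
  next
    case False
    then have "j < i" using Suc by simp
    then obtain n where n: "i = Suc n" using Suc by (cases i) auto
    have "pp j < pp i" using Suc \<open>j < i\<close> by simp
    also have "pp i < pp (Suc i)" using n pp_inc by simp
    finally show ?thesis .
  qed
qed

lemma pp_ge5: "i \<ge> 1 \<Longrightarrow> pp i \<ge> 5"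
  using pp_mono[of 1 i] pp_1 by (cases "i = 1") auto

lemma pp_notdvd: "1 \<le> j \<Longrightarrow> j < i \<Longrightarrow> \<not> pp i dvd ree_order (3 ^ pp j)"
proof -
  assume j: "1 \<le> j" "j < i"
  then obtain n where n: "i = Suc (Suc n)" by (cases i; cases "i - 1") auto
  have "pp j \<in> set (plist n)" using j n by (intro pp_mem) auto
  then show ?thesis using plist_step[of n] n by (simp add: pp_Suc)
qed



lemma geom_nat: "(y::nat)^c - 1 = (y - 1) * (\<Sum>i<c. y^i)"
proof (cases "y = 0")
  case True then show ?thesis by (cases c) auto
next
  case False
  have "int (y^c - 1) = int (y^c) - 1" using False by (simp add: of_nat_diff)
  also have "\<dots> = (int y)^c - 1" by simp
  also have "\<dots> = (int y - 1) * (\<Sum>i<c. (int y)^i)" by (rule power_diff_1_eq)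
  also have "\<dots> = int ((y - 1) * (\<Sum>i<c. y^i))" using False by (simp add: of_nat_diff)
  finally show ?thesis by (simp only: of_nat_eq_iff)
qed

lemma pm1_dvd: "a dvd b \<Longrightarrow> (x::nat)^a - 1 dvd x^b - 1"
proof -
  assume "a dvd b"
  then obtain c where c: "b = a * c" by blast
  have "x^b - 1 = (x^a)^c - 1" by (simp add: c power_mult)
  also have "\<dots> = (x^a - 1) * (\<Sum>i<c. (x^a)^i)" by (rule geom_nat)
  finally show ?thesis by simp
qed

lemma dvd_pm1_cong: "(r::nat) dvd x - 1 \<longleftrightarrow> [x = 1] (mod r)" if "x \<ge> 1"
  using that by (simp add: cong_altdef_nat cong_sym_eq)

lemma p3: "prime (3::nat)" by simp
lemma p5: "prime (5::nat)" by simp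
lemma p7: "prime (7::nat)" by simp
lemma p13: "prime (13::nat)" by simp
lemma p19: "prime (19::nat)" by simp

lemma G:
  fixes r a b :: nat
  assumes r: "prime r" "r \<noteq> 3" and a: "r dvd 3^a - 1" and b: "r dvd 3^b - 1"
  shows "r dvd 3^(gcd a b) - 1"
proof -
  have cop: "coprime r 3" using r by (simp add: primes_coprime)
  have "[3^a = 1] (mod r)" using a dvd_pm1_cong[of "3^a" r] by simp
  then have "ord r 3 dvd a" by (simp add: ord_divides')
  moreover have "[3^b = 1] (mod r)" using b dvd_pm1_cong[of "3^b" r] by simp
  then have "ord r 3 dvd b" by (simp add: ord_divides')
  ultimately have "ord r 3 dvd gcd a b" by simp
  then have "[3^(gcd a b) = 1] (mod r)" by (simp add: ord_divides')
  then show ?thesis using dvd_pm1_cong[of "3^(gcd a b)" r] by simp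
qed

lemma ree_dvd:
  assumes r: "prime r" "r \<noteq> 3" and d: "r dvd ree_order (3^n)"
  shows "r dvd 3^(6*n) - 1"
proof -
  have n3: "\<not> r dvd 3^(3*n)"
  proof
    assume "r dvd 3^(3*n)"
    then have "r dvd 3" using r prime_dvd_power by blast
    then show False using r primes_dvd_imp_eq[OF r(1) p3] by simp
  qed
  have e3: "(3::nat)^(3*n) = (3^n)^3" by (simp add: power_mult[symmetric] mult.commute)
  have "ree_order (3^n) = 3^(3*n) * ((3^n - 1) * (3^(3*n) + 1))"
    unfolding ree_order_def e3 by (simp only: mult.assoc)
  then have "r dvd (3^n - 1) * (3^(3*n) + 1)" using d n3 r prime_dvd_mult_iff by metis
  moreover have "((3::nat)^n - 1) * (3^(3*n) + 1) dvd (3^(3*n) - 1) * (3^(3*n) + 1)"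
    using pm1_dvd[of n "3*n" 3] by (intro mult_dvd_mono) auto
  moreover have "(3^(3*n) - 1) * (3^(3*n) + 1) = (3::nat)^(6*n) - 1"
  proof -
    have "(3::nat)^(3*n) \<ge> 1" by simp
    then have "((3::nat)^(3*n) - 1) * (3^(3*n) + 1) = 3^(3*n) * 3^(3*n) - 1"
      by (simp add: algebra_simps)
    also have "\<dots> = 3^(6*n) - 1" by (simp flip: power_add)
    finally show ?thesis .
  qed
  ultimately show ?thesis by (metis dvd_trans)
qed

lemma cong_binom: "[(1 + a)^n = 1 + n*a] (mod a^2)" for a n :: nat
proof (induct n)
  case 0 then show ?case by simp
next
  case (Suc n)
  have "(1 + a)^Suc n = (1+a)^n * (1 + a)" by simp
  have "[(1+a)^n * (1 + a) = (1 + n*a) * (1 + a)] (mod a^2)" using Suc by (intro cong_mult) auto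
  moreover have "(1 + n*a) * (1 + a) = (1 + Suc n * a) + n * a^2" by (simp add: algebra_simps power2_eq_square)
  moreover have "[(1 + Suc n * a) + n * a^2 = 1 + Suc n * a] (mod a^2)"
    by (simp add: cong_def)
  ultimately show ?case by (metis (no_types) cong_trans power_Suc2)
qed

lemma sum_cong: "[(\<Sum>i<n. x^i) = n] (mod (x - 1))" if x1: "x \<ge> 1" for x n :: nat
proof -
  have "[(\<Sum>i<n. x^i) = (\<Sum>i<n. 1)] (mod (x - 1))"
  proof (rule cong_sum)
    fix i
    show "[x^i = 1] (mod (x - 1))"
      using x1 pm1_dvd[of 1 i x] dvd_pm1_cong[of "x^i" "x-1"] by simp
  qed
  then show ?thesis by simp
qed

lemma L:
  assumes r: "prime r" "odd r" and x: "r dvd x - 1" "x \<ge> 1"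
  shows "\<not> r^2 dvd (\<Sum>i<r. x^i)"
proof
  assume H: "r^2 dvd (\<Sum>i<r. x^i)"
  obtain u where u: "x = 1 + r * u" using x by (metis dvd_def le_add_diff_inverse)
  have c1: "[(\<Sum>i<r. x^i) = (\<Sum>i<r. 1 + i * (r*u))] (mod r^2)"
  proof (rule cong_sum)
    fix i
    have "[(1 + r*u)^i = 1 + i*(r*u)] (mod (r*u)^2)" by (rule cong_binom)
    then show "[x^i = 1 + i * (r*u)] (mod r^2)" unfolding u
      by (rule cong_dvd_modulus_nat) (simp add: power_mult_distrib)
  qed
  have "(\<Sum>i<r. 1 + i * (r*u)) = (\<Sum>i<r. 1) + (\<Sum>i<r. i * (r*u))"
    by (rule sum.distrib)
  moreover have "(\<Sum>i<r. i*(r*u)) = (r*u) * (\<Sum>i<r. i)"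
    by (subst sum_distrib_left) (simp add: mult.commute)
  ultimately have "(\<Sum>i<r. 1 + i * (r*u)) = r + r * u * (\<Sum>i<r. i)"
    by simp
  moreover have "(\<Sum>i<r. i) = r * ((r - 1) div 2)"
  proof -
    have g: "2 * (\<Sum>i<n. i) = n * (n - 1)" for n :: nat
    proof (induct n)
      case (Suc n)
      have "2 * (\<Sum>i<Suc n. i) = 2 * (\<Sum>i<n. i) + 2 * n" by simp
      also have "\<dots> = n * (n - 1) + 2 * n" using Suc by simp
      finally show ?case by (cases n) (auto simp: algebra_simps)
    qed simp
    obtain s where s: "r = 2*s + 1" using r by (auto elim!: oddE)
    have "2 * (\<Sum>i<r. i) = 2 * (r * s)" using g[of r] s by simp
    then show ?thesis using s by simp
  qed
  ultimately have e3: "(\<Sum>i<r. 1 + i * (r*u)) = r + r^2 * (u * ((r - 1) div 2))"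
    by (simp add: power2_eq_square algebra_simps)
  have "[(\<Sum>i<r. x^i) = r + r^2 * (u * ((r - 1) div 2))] (mod r^2)"
    using c1 unfolding e3 .
  moreover have "[r + r^2 * (u * ((r - 1) div 2)) = r] (mod r^2)" by (simp add: cong_def)
  ultimately have "[(\<Sum>i<r. x^i) = r] (mod r^2)" by (rule cong_trans)
  then have "r^2 dvd r" using H by (simp add: cong_dvd_iff)
  then show False using r
    by (metis dvd_imp_le gr0I not_prime_0 power2_eq_square nat_mult_le_cancel1 prime_gt_1_nat not_le mult.right_neutral)
qed

lemma seven_pow: "\<exists>u. (7::nat)^(3^h) = 1 + 3^(h+1) * u \<and> \<not> 3 dvd u"
proof (induct h)
  case 0 then show ?case by (intro exI[of _ 2]) auto
next
  case (Suc h)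
  then obtain u where u: "(7::nat)^(3^h) = 1 + 3^(h+1) * u" "\<not> 3 dvd u" by blast
  define t where "t = (3::nat)^h"
  have e: "\<And>t u::nat. (1 + 3*t*u)^3 = 1 + 9*t*(u + 3*(t*u^2 + t^2*u^3))"
    by (simp add: algebra_simps power2_eq_square power3_eq_cube)
  have "(7::nat)^(3^Suc h) = (7^(3^h))^3" by (simp add: power_mult[symmetric] mult.commute)
  also have "\<dots> = (1 + 3*t*u)^3" using u by (simp add: t_def)
  also have "\<dots> = 1 + 9*t * (u + 3*(t*u^2 + t^2*u^3))" by (rule e)
  also have "\<dots> = 1 + 3^(Suc h + 1) * (u + 3*(t*u^2 + t^2*u^3))" by (simp add: t_def)
  finally have eq: "(7::nat)^(3^Suc h) = 1 + 3^(Suc h + 1) * (u + 3*(t*u^2 + t^2*u^3))" .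
  have "\<not> 3 dvd u + 3*(t*u^2 + t^2*u^3)" using u(2) by (metis dvd_add_left_iff dvd_triv_left)
  then show ?case using eq by blast
qed

lemma seven_lte: "[(7::nat)^k = 1] (mod 3^(h+1)) \<Longrightarrow> 3^h dvd k"
proof (induct h arbitrary: k)
  case 0 then show ?case by simp
next
  case (Suc h)
  have "[(7::nat)^k = 1] (mod 3^(h+1))"
    using Suc.prems by (rule cong_dvd_modulus_nat) (simp add: le_imp_power_dvd)
  then have "3^h dvd k" using Suc.hyps by blast
  then obtain k' where k: "k = 3^h * k'" by blast
  obtain u where u: "(7::nat)^(3^h) = 1 + 3^(h+1) * u" "\<not> 3 dvd u" using seven_pow by blast
  have "(7::nat)^k = (1 + 3^(h+1)*u)^k'" by (simp add: k power_mult u(1))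
  moreover have "[(1 + 3^(h+1)*u)^k' = 1 + k' * (3^(h+1)*u)] (mod (3^(h+1)*u)^2)" by (rule cong_binom)
  then have "[(1 + 3^(h+1)*u)^k' = 1 + k' * (3^(h+1)*u)] (mod 3^(Suc h + 1))"
    by (rule cong_dvd_modulus_nat) (simp add: power2_eq_square power_add)
  ultimately have "[1 + k' * (3^(h+1)*u) = 1] (mod 3^(Suc h + 1))"
    using Suc.prems by (metis cong_sym cong_trans)
  then have "3^(Suc h + 1) dvd k' * (3^(h+1)*u)"
    by (simp add: cong_altdef_nat)
  then have "3 * 3^(h+1) dvd (k' * u) * 3^(h+1)" by (simp add: algebra_simps)
  then have "3 dvd k' * u" using dvd_times_right_cancel_iff[of "(3::nat)^(h+1)" 3 "k'*u"] by simp
  then have "3 dvd k'" using u(2) p3 prime_dvd_mult_iff by blast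
  then show ?case using k by (auto simp: power_Suc2 intro: mult_dvd_mono)
qed



lemma period: "[a^p = 1] (mod m) \<Longrightarrow> [a^n = a^(n mod p)] (mod m)" for a p m n :: nat
proof -
  assume h: "[a^p = 1] (mod m)"
  have "a^n = (a^p)^(n div p) * a^(n mod p)"
    by (simp add: power_mult[symmetric] power_add[symmetric])
  also have "[\<dots> = 1^(n div p) * a^(n mod p)] (mod m)"
    using h by (intro cong_mult cong_pow) auto
  finally show ?thesis by simp
qed

lemma ree_eq: "ree_order (3^n) = 3^(3*n) * (3^n - 1) * (3^(3*n) + 1)"
proof -
  have e3: "(3::nat)^(3*n) = (3^n)^3" by (simp add: power_mult[symmetric] mult.commute)
  show ?thesis unfolding ree_order_def e3 by (rule refl)
qed

lemma dvd_ree1: "(3::nat)^n - 1 dvd ree_order (3^n)"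
  unfolding ree_eq by (metis dvd_mult dvd_mult2 dvd_refl)

lemma dvd_ree2: "(3::nat)^(3*n) + 1 dvd ree_order (3^n)"
  unfolding ree_eq by (rule dvd_triv_right)

lemma dvd_ree3: "(3::nat)^(3*n) dvd ree_order (3^n)"
  unfolding ree_eq by (metis dvd_mult2 dvd_refl mult.assoc)

lemma three_ndvd: "\<not> 3 dvd (3::nat)^n - 1" if "n \<ge> 1"
proof
  assume h: "3 dvd (3::nat)^n - 1"
  have "3 dvd (3::nat)^n" using that by (simp add: dvd_power)
  then have "3 dvd (3::nat)^n - (3^n - 1)" using h by (rule dvd_diff_nat)
  moreover have "(3::nat)^n - (3^n - 1) = 1" by (simp add: Suc_leI)
  ultimately show False by simp
qed

lemma mod8: "odd n \<Longrightarrow> [(3::nat)^n = 3] (mod 8)"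
proof -
  assume "odd n"
  then obtain k where k: "n = 2*k + 1" by (auto elim!: oddE)
  have "(3::nat)^n = 9^k * 3" by (simp add: k power_add power_mult)
  also have "[\<dots> = 1^k * 3] (mod 8)" by (intro cong_mult cong_pow) (auto simp: cong_def)
  finally show ?thesis by simp
qed

lemma not_single: "prime r \<Longrightarrow> r dvd n \<Longrightarrow> n \<noteq> 0 \<Longrightarrow> r \<noteq> t \<Longrightarrow> prime_set n \<noteq> {t}"
  by (metis in_prime_factors_iff singletonD)

lemma odd_prime_of: "odd (w::nat) \<Longrightarrow> w > 1 \<Longrightarrow> \<exists>r. prime r \<and> odd r \<and> r dvd w"
proof -
  assume w: "odd w" "w > 1"
  then obtain p where p: "prime p" "p dvd w" using prime_factor_nat[of w] by auto
  have "odd p" using w(1) p(2) dvd_trans by blast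
  then show ?thesis using p by blast
qed

lemma plus_minus_one:
  assumes "odd n" "n \<ge> 3"
  shows "\<exists>r. prime r \<and> odd r \<and> r dvd (3::nat)^n + 1" "\<exists>r. prime r \<and> odd r \<and> r dvd (3::nat)^n - 1"
proof -
  define q where "q = (3::nat)^n"
  have q8: "q mod 8 = 3" using mod8[OF assms(1)] unfolding q_def cong_def by simp
  have "q \<ge> 3^3" unfolding q_def using assms(2) by (intro power_increasing) auto
  then have q27: "q \<ge> 27" by simp
  define c where "c = q div 8"
  have qc: "q = 8*c + 3" using q8 unfolding c_def by (metis div_mult_mod_eq mult.commute)
  have "odd (2*c + 1)" by simp
  moreover have "2*c + 1 > 1" using qc q27 by simp
  ultimately obtain r where "prime r" "odd r" "r dvd 2*c+1" using odd_prime_of by blast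
  moreover have "q + 1 = (2*c + 1) * 4" using qc by simp
  then have "2*c + 1 dvd q + 1" by (metis dvd_triv_left)
  ultimately show "\<exists>r. prime r \<and> odd r \<and> r dvd (3::nat)^n + 1" unfolding q_def by (metis dvd_trans)
  have "odd (4*c + 1)" by simp
  moreover have "4*c + 1 > 1" using qc q27 by simp
  ultimately obtain r' where "prime r'" "odd r'" "r' dvd 4*c+1" using odd_prime_of by blast
  moreover have "q - 1 = (4*c + 1) * 2" using qc by simp
  then have "4*c + 1 dvd q - 1" by (metis dvd_triv_left)
  ultimately show "\<exists>r. prime r \<and> odd r \<and> r dvd (3::nat)^n - 1" unfolding q_def by (metis dvd_trans)
qed



lemma pow_gt: "n < (3::nat)^n"
  by (induct n) auto

lemma Z:
  assumes p: "prime p" "p \<ge> 5" and p': "prime p'" "p' \<ge> 5"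
  shows "\<exists>r. prime r \<and> r dvd (3::nat)^(p*p') - 1 \<and> \<not> r dvd 3^p - 1 \<and> \<not> r dvd 3^p' - 1"
proof (rule ccontr)
  assume "\<not> ?thesis"
  then have H: "\<And>r. prime r \<Longrightarrow> r dvd (3::nat)^(p*p') - 1 \<Longrightarrow> r dvd 3^p - 1 \<or> r dvd 3^p' - 1"
    by blast
  define x where "x = (3::nat)^p"
  define y where "y = (3::nat)^p'"
  define A where "A = (\<Sum>i<p'. x^i)"
  define B where "B = (\<Sum>i<p. y^i)"
  define D where "D = (3::nat)^(p*p') - 1"
  have x1: "x \<ge> 3" unfolding x_def using p by (metis power_increasing[of 1 p 3] power_one_right one_le_numeral prime_ge_1_nat)
  have y1: "y \<ge> 3" unfolding y_def using p' by (metis power_increasing[of 1 p' 3] power_one_right one_le_numeral prime_ge_1_nat)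
  have DA: "D = (x - 1) * A" unfolding D_def A_def x_def
    using geom_nat[of "3^p" p'] by (simp add: power_mult)
  have DB: "D = (y - 1) * B" unfolding D_def B_def y_def
    using geom_nat[of "3^p'" p] by (simp add: power_mult[symmetric] mult.commute)
  have "x^(p'-1) \<le> A" unfolding A_def using p' by (intro member_le_sum) auto
  then have A0: "A > 0" using x1 by (metis gr0I le_zero_eq power_not_zero not_numeral_le_zero)
  have B0: "B > 0"
  proof -
    have "y^0 \<le> B" unfolding B_def using p by (intro member_le_sum) auto
    then show ?thesis by simp
  qed
  have D0: "D \<noteq> 0" using DA A0 x1 by simp
  have AL: "x^(p'-1) \<le> A" by fact
  have dvdA: "A dvd p * p' * (y - 1)"
  proof (rule multiplicity_le_imp_dvd)
    show "A \<noteq> 0" using A0 by simp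
    fix r :: nat assume r: "prime r"
    show "multiplicity r A \<le> multiplicity r (p * p' * (y - 1))"
    proof (cases "r dvd A")
      case False then show ?thesis by (simp add: not_dvd_imp_multiplicity_0)
    next
      case rA: True
      have ne: "p * p' \<noteq> 0" "y - 1 \<noteq> 0" using p p' y1 by auto
      have mR: "multiplicity r (p * p' * (y - 1)) = multiplicity r (p * p') + multiplicity r (y - 1)"
        using ne r by (simp add: prime_elem_multiplicity_mult_distrib)
      show ?thesis
      proof (cases "r dvd x - 1")
        case True
        have "[A = p'] (mod (x - 1))" unfolding A_def using x1 by (intro sum_cong) auto
        then have "[A = p'] (mod r)" using True by (rule cong_dvd_modulus_nat)
        then have "r dvd p'" using rA by (simp add: cong_dvd_iff)
        then have rp': "r = p'" using r p' primes_dvd_imp_eq by blast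
        have "odd r" using rp' p' by (metis prime_odd_nat numeral_le_iff semiring_norm(70) semiring_norm(73) numeral_One le_numeral_extra(1) order.trans not_less_eq_eq  eval_nat_numeral(3) one_le_numeral less_numeral_extra(4) nat_less_le numeral_2_eq_2 Suc_le_eq)
        have "\<not> r^2 dvd A" unfolding A_def rp' using L[of p' x] p' \<open>odd r\<close> rp' True x1 by auto
        then have "multiplicity r A \<le> 1" using power_dvd_iff_le_multiplicity[where p=r and n=2 and x=A] A0 prime_gt_1_nat[OF r] by simp
        moreover have "multiplicity r (p * p') \<ge> 1"
          using power_dvd_iff_le_multiplicity[where p=r and n=1 and x="p*p'"] rp' p p' by simp
        ultimately show ?thesis using mR by simp
      next
        case False
        have "r dvd D" using DA rA by simp
        then have ry: "r dvd y - 1" using H[OF r] False unfolding D_def x_def y_def by blast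
        have mD: "multiplicity r D = multiplicity r A"
          using DA False A0 x1 r by (simp add: prime_elem_multiplicity_mult_distrib not_dvd_imp_multiplicity_0)
        have mD2: "multiplicity r D = multiplicity r (y - 1) + multiplicity r B"
          using DB B0 y1 r by (simp add: prime_elem_multiplicity_mult_distrib)
        show ?thesis
        proof (cases "r dvd B")
          case False
          then show ?thesis using mD mD2 mR by (simp add: not_dvd_imp_multiplicity_0)
        next
          case True
          have "[B = p] (mod (y - 1))" unfolding B_def using y1 by (intro sum_cong) auto
          then have "[B = p] (mod r)" using ry by (rule cong_dvd_modulus_nat)
          then have "r dvd p" using True by (simp add: cong_dvd_iff)
          then have rp: "r = p" using r p primes_dvd_imp_eq by blast
          have "odd r" using rp p by (metis prime_odd_nat numeral_le_iff semiring_norm(70) semiring_norm(73) numeral_One le_numeral_extra(1) order.trans not_less_eq_eq  eval_nat_numeral(3) one_le_numeral less_numeral_extra(4) nat_less_le numeral_2_eq_2 Suc_le_eq)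
          have "\<not> r^2 dvd B" unfolding B_def rp using L[of p y] p \<open>odd r\<close> rp ry y1 by auto
          then have "multiplicity r B \<le> 1" using power_dvd_iff_le_multiplicity[where p=r and n=2 and x=B] B0 prime_gt_1_nat[OF r] by simp
          moreover have "multiplicity r (p * p') \<ge> 1"
            using power_dvd_iff_le_multiplicity[where p=r and n=1 and x="p*p'"] rp p p' by simp
          ultimately show ?thesis using mD mD2 mR by simp
        qed
      qed
    qed
  qed
  have pos: "p * p' * (y - 1) > 0" using p p' y1 by simp
  have "A \<le> p * p' * (y - 1)" using dvdA pos by (simp add: dvd_imp_le)
  also have "\<dots> < p * p' * y" using p p' y1 by simp
  also have "\<dots> \<le> 3^p * 3^p' * 3^p'" unfolding y_def
    using pow_gt[of p] pow_gt[of p'] by (intro mult_mono) auto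
  also have "\<dots> = 3^(p + 2*p')" by (simp add: power_add mult_2)
  also have "\<dots> \<le> 3^(p*(p'-1))"
  proof (rule power_increasing)
    have f1: "5 * p' \<le> p * p'" "5 * p \<le> p * p'" using p p' by (auto intro: mult_right_mono mult_left_mono)
    have e: "p*(p'-1) = p*p' - p" by (simp add: diff_mult_distrib2)
    show "p + 2*p' \<le> p*(p'-1)" unfolding e using f1 by linarith
  qed simp
  also have "\<dots> = x^(p'-1)" unfolding x_def by (simp add: power_mult)
  finally show False using AL by simp
qed



lemma prime5_mods:
  assumes "prime (p::nat)" "p \<ge> 5"
  shows "\<not> 2 dvd p" "\<not> 3 dvd p" "odd p"
proof -
  show "\<not> 2 dvd p" using assms primes_dvd_imp_eq[OF two_is_prime_nat assms(1)] by auto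
  show "\<not> 3 dvd p" using assms primes_dvd_imp_eq[OF p3 assms(1)] by auto
  then show "odd p" using \<open>\<not> 2 dvd p\<close> by simp
qed

lemma mod3p: assumes "prime (p::nat)" "p \<ge> 5" shows "p mod 3 = 1 \<or> p mod 3 = 2"
proof -
  have "p mod 3 \<noteq> 0" using prime5_mods(2)[OF assms] by (simp add: dvd_eq_mod_eq_0)
  moreover have "p mod 3 < 3" by simp
  ultimately show ?thesis by linarith
qed

lemma seven_dvd: "odd n \<Longrightarrow> 7 dvd (3::nat)^(3*n) + 1"
proof -
  assume n: "odd n"
  have "[(27::nat)^n = 27^(n mod 2)] (mod 7)" by (rule period) (simp add: cong_def)
  then have "[(27::nat)^n = 27] (mod 7)" using n by (simp add: odd_iff_mod_2_eq_one)
  then have "[(27::nat)^n + 1 = 27 + 1] (mod 7)" by (rule cong_add[OF _ cong_refl])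
  then have "7 dvd (27::nat)^n + 1 \<longleftrightarrow> 7 dvd (27 + 1::nat)" by (rule cong_dvd_iff)
  then have "7 dvd (27::nat)^n + 1" by simp
  moreover have "(3::nat)^(3*n) = 27^n" by (simp add: power_mult)
  ultimately show ?thesis by simp
qed

lemma not13: assumes "prime p" "p \<ge> 5" shows "\<not> 13 dvd ree_order (3^p)"
proof
  assume h: "13 dvd ree_order (3^p)"
  have m3: "p mod 3 = 1 \<or> p mod 3 = 2" using mod3p[OF assms] .
  have per: "[(3::nat)^n = 3^(n mod 3)] (mod 13)" for n by (rule period) (simp add: cong_def)
  have "13 dvd ((3::nat)^(3*p) * (3^p - 1)) * (3^(3*p) + 1)" using h unfolding ree_eq .
  then have "13 dvd (3::nat)^(3*p) * (3^p - 1) \<or> 13 dvd (3::nat)^(3*p) + 1"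
    by (rule prime_dvd_mult_iff[THEN iffD1, OF p13])
  then have "13 dvd (3::nat)^(3*p) \<or> 13 dvd (3::nat)^p - 1 \<or> 13 dvd (3::nat)^(3*p) + 1"
    using prime_dvd_mult_iff[OF p13] by blast
  moreover have "\<not> 13 dvd (3::nat)^(3*p)"
  proof
    assume "13 dvd (3::nat)^(3*p)"
    then have "13 dvd (3::nat)" using prime_dvd_power[OF p13] by blast
    then show False by simp
  qed
  moreover have "\<not> 13 dvd (3::nat)^p - 1"
  proof
    assume "13 dvd (3::nat)^p - 1"
    then have "[(3::nat)^p = 1] (mod 13)" using dvd_pm1_cong[of "3^p" 13] by simp
    moreover have "[(3::nat)^p = 3^(p mod 3)] (mod 13)" by (rule per)
    ultimately have "[(3::nat)^(p mod 3) = 1] (mod 13)" by (metis cong_sym cong_trans)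
    then show False using m3 by (auto simp: cong_def)
  qed
  moreover have "\<not> 13 dvd (3::nat)^(3*p) + 1"
  proof
    assume a: "13 dvd (3::nat)^(3*p) + 1"
    have "[(3::nat)^(3*p) = 3^((3*p) mod 3)] (mod 13)" by (rule per)
    then have "[(3::nat)^(3*p) = 1] (mod 13)" by simp
    then have "[(3::nat)^(3*p) + 1 = 1 + 1] (mod 13)" by (rule cong_add[OF _ cong_refl])
    then have "13 dvd (3::nat)^(3*p) + 1 \<longleftrightarrow> 13 dvd (1 + 1::nat)" by (rule cong_dvd_iff)
    then have "(13::nat) dvd (1 + 1)" using a by blast
    then have "(13::nat) \<le> 1 + 1" by (rule dvd_imp_le) simp
    then show False by simp
  qed
  ultimately show False by blast
qed

lemma not5: assumes "prime p" "p \<ge> 5" shows "\<not> 5 dvd ree_order (3^p)"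
proof
  assume "5 dvd ree_order (3^p)"
  then have "5 dvd (3::nat)^(6*p) - 1" using ree_dvd[OF p5] by simp
  then have a: "[(3::nat)^(6*p) = 1] (mod 5)" using dvd_pm1_cong[of "3^(6*p)" 5] by simp
  have "[(3::nat)^(6*p) = 3^((6*p) mod 4)] (mod 5)" by (rule period) (simp add: cong_def)
  moreover have "(6*p) mod 4 = 2"
  proof -
    obtain k where k: "p = 2*k+1" using prime5_mods(3)[OF assms] by (auto elim!: oddE)
    have e: "6*p = 2 + 4*(3*k+1)" using k by simp
    show ?thesis unfolding e by (rule trans[OF mod_mult_self2]) simp
  qed
  ultimately have "[(3::nat)^2 = 1] (mod 5)" using a by (metis cong_sym cong_trans)
  then show False by (simp add: cong_def)
qed

lemma not19: assumes "prime p" "p \<ge> 5" shows "\<not> 19 dvd (3::nat)^(6*p) - 1"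
proof
  assume "19 dvd (3::nat)^(6*p) - 1"
  then have a: "[(3::nat)^(6*p) = 1] (mod 19)" using dvd_pm1_cong[of "3^(6*p)" 19] by simp
  have "[(3::nat)^(6*p) = 3^((6*p) mod 18)] (mod 19)" by (rule period) (simp add: cong_def)
  moreover have "(6*p) mod 18 = 6 \<or> (6*p) mod 18 = 12"
  proof -
    have "(6*p) mod (6*3) = 6 * (p mod 3)" by (rule mod_mult_mult1)
    then show ?thesis using mod3p[OF assms] by auto
  qed
  ultimately have "[(3::nat)^6 = 1] (mod 19) \<or> [(3::nat)^12 = 1] (mod 19)" using a by (metis cong_sym cong_trans)
  then show False by (simp add: cong_def)
qed

lemma dvd19: assumes "odd m" "3 dvd m" shows "19 dvd ree_order (3^m)"
proof -
  have "[(3::nat)^(3*m) = 3^((3*m) mod 18)] (mod 19)" by (rule period) (simp add: cong_def)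
  moreover have "(3*m) mod 18 = 9"
  proof -
    obtain t where t: "m = 3*t" using assms(2) by blast
    then have "odd t" using assms(1) by simp
    then obtain s where "t = 2*s+1" by (auto elim!: oddE)
    then have e: "3*m = 9 + 18*s" using t by simp
    show ?thesis unfolding e by (rule trans[OF mod_mult_self2]) simp
  qed
  ultimately have "[(3::nat)^(3*m) = 3^9] (mod 19)" by simp
  then have "[(3::nat)^(3*m) + 1 = 3^9 + 1] (mod 19)" by (rule cong_add[OF _ cong_refl])
  then have "19 dvd (3::nat)^(3*m) + 1 \<longleftrightarrow> 19 dvd (3^9 + 1::nat)" by (rule cong_dvd_iff)
  then have "19 dvd (3::nat)^(3*m) + 1" by simp
  then show ?thesis using dvd_ree2 dvd_trans by blast
qed

lemma dvd728: assumes "prime r" "r dvd (728::nat)" shows "r = 2 \<or> r = 7 \<or> r = 13"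
proof -
  have "r dvd (2^3 * 7) * 13" using assms(2) by simp
  then have "r dvd 2^3 * 7 \<or> r dvd 13" by (rule prime_dvd_mult_iff[THEN iffD1, OF assms(1)])
  then have "r dvd 2^3 \<or> r dvd 7 \<or> r dvd 13" using prime_dvd_mult_iff[OF assms(1)] by blast
  then have "r dvd 2 \<or> r dvd 7 \<or> r dvd 13" using assms prime_dvd_power by blast
  then show ?thesis using assms primes_dvd_imp_eq two_is_prime_nat p7 p13 by blast
qed

lemma in_all: assumes "prime p" "p \<ge> 5" shows "{2,3,7} \<subseteq> prime_set (ree_order (3^p))"
proof -
  have ne: "ree_order (3^p) \<noteq> 0" using ree_pos[of p] assms by simp
  have "even ((3::nat)^p - 1)" by simp
  then have "2 dvd ree_order (3^p)" using dvd_ree1 dvd_trans by blast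
  moreover have "3 dvd (3::nat)^(3*p)" using assms by (intro dvd_power) auto
  then have "3 dvd ree_order (3^p)" using dvd_ree3[of p] dvd_trans by blast
  moreover have "7 dvd ree_order (3^p)" using seven_dvd[of p] prime5_mods[OF assms] dvd_ree2 dvd_trans by blast
  ultimately show ?thesis using ne p3 p7 by (auto simp: in_prime_factors_iff)
qed

lemma partA:
  assumes p: "prime p" "p \<ge> 5" and p': "prime p'" "p' \<ge> 5" and ne: "p \<noteq> p'"
  shows "prime_set (ree_order (3^p)) \<inter> prime_set (ree_order (3^p')) = {2,3,7}"
proof
  show "{2,3,7} \<subseteq> prime_set (ree_order (3^p)) \<inter> prime_set (ree_order (3^p'))"
    using in_all[OF p] in_all[OF p'] by blast
  show "prime_set (ree_order (3^p)) \<inter> prime_set (ree_order (3^p')) \<subseteq> {2,3,7}"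
  proof
    fix r assume "r \<in> prime_set (ree_order (3^p)) \<inter> prime_set (ree_order (3^p'))"
    then have r: "prime r" "r dvd ree_order (3^p)" "r dvd ree_order (3^p')" by (auto simp: in_prime_factors_iff)
    show "r \<in> {2,3,7}"
    proof (cases "r = 3")
      case False
      have "r dvd 3^(6*p) - 1" "r dvd 3^(6*p') - 1" using ree_dvd r False by auto
      then have "r dvd 3^(gcd (6*p) (6*p')) - 1" using G r(1) False by blast
      moreover have "gcd (6*p) (6*p') = 6"
        using primes_coprime[OF p(1) p'(1) ne] by (simp flip: gcd_mult_distrib_nat)
      ultimately have "r dvd 728" by simp
      then have "r = 2 \<or> r = 7 \<or> r = 13" using dvd728 r by blast
      then show ?thesis using not13[OF p] r by auto
    qed simp
  qed
qed

lemma big_dvd: assumes p: "prime p" "p \<ge> 5" and p': "prime p'" "p \<le> p'" and d: "p dvd ree_order (3^p')"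
  shows "p = 7"
proof -
  have p3': "p \<noteq> 3" using p by auto
  have a1: "p dvd 3^(6*p') - 1" using ree_dvd[OF p(1) p3' d] .
  have "\<not> p dvd 3" using p3' p primes_dvd_imp_eq p3 by blast
  then have "[3^(p-1) = 1] (mod p)" using fermat_theorem[OF p(1)] by blast
  then have a2: "p dvd 3^(p-1) - 1" using dvd_pm1_cong[of "3^(p-1)" p] by simp
  have g: "p dvd 3^(gcd (6*p') (p-1)) - 1" using G[OF p(1) p3' a1 a2] .
  have "\<not> p' dvd p - 1"
  proof
    assume "p' dvd p - 1"
    then have "p' \<le> p - 1" using p by (intro dvd_imp_le) auto
    then show False using p' p by simp
  qed
  then have "coprime p' (p-1)" using prime_imp_coprime[OF p'(1)] by blast
  then have "coprime (p-1) p'" by (simp add: coprime_commute)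
  then have "gcd (6*p') (p-1) = gcd 6 (p-1)" by (rule gcd_mult_left_right_cancel)
  then have "gcd (6*p') (p-1) dvd 6" by simp
  then have "3^(gcd (6*p') (p-1)) - 1 dvd (3::nat)^6 - 1" by (rule pm1_dvd)
  then have "p dvd (3::nat)^6 - 1" using dvd_trans[OF g] by blast
  then have "p dvd 728" by simp
  then have "p = 2 \<or> p = 7 \<or> p = 13" using dvd728 p by blast
  moreover have "p' \<ge> 5" using p p' by simp
  then have "p \<noteq> 13" using not13[OF p'(1)] d by auto
  ultimately show ?thesis using p by auto
qed

lemma pp_ne7: "i \<ge> 1 \<Longrightarrow> pp i \<noteq> 7"
proof -
  assume i: "i \<ge> 1"
  show ?thesis
  proof (cases "i = 1")
    case True then show ?thesis using pp_1 by simp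
  next
    case False
    then have "\<not> pp i dvd ree_order (3 ^ pp 1)" using i pp_notdvd[of 1 i] by simp
    moreover have "7 dvd ree_order (3 ^ pp 1)" using in_all[of 5] pp_1 p5 by (auto simp: in_prime_factors_iff)
    ultimately show ?thesis by auto
  qed
qed

lemma partB: assumes "i \<ge> 1" "j \<ge> 1" shows "\<not> pp i dvd ree_order (3 ^ pp j)"
proof (cases "j < i")
  case True then show ?thesis using pp_notdvd assms by blast
next
  case False
  then have "pp i \<le> pp j" using pp_mono[of i j] assms by (cases "i = j") auto
  then show ?thesis using big_dvd[of "pp i" "pp j"] pp_prime pp_ge5 pp_ne7 assms by blast
qed



lemma three_pow_ge: "h \<ge> 2 \<Longrightarrow> 2*h + 2 \<le> (3::nat)^h"
proof (induct h rule: dec_induct)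
  case base then show ?case by simp
next
  case (step n) then show ?case by simp
qed

lemma mod6: "(p::nat) mod 3 = 1 \<or> p mod 3 = 2 \<Longrightarrow> odd p \<Longrightarrow> p mod 6 = 1 \<or> p mod 6 = 5"
  by presburger

lemma notpow7:
  assumes N1: "N > 1" and c: "[N = 1] (mod 3^(h+1))" and b: "N \<le> 3^(2*h+2)" and h: "h \<ge> 2"
  shows "prime_set N \<noteq> {7}"
proof
  assume ps: "prime_set N = {7}"
  define k where "k = multiplicity 7 N"
  have "N = (\<Prod>p \<in> prime_factors N. p ^ multiplicity p N)"
    using N1 by (intro prime_factorization_nat) simp
  then have N: "N = 7^k" unfolding k_def ps by simp
  have "k \<noteq> 0" using N N1 by (intro notI) simp
  moreover have "3^h dvd k" using c N seven_lte by simp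
  ultimately have "3^h \<le> k" by (simp add: dvd_imp_le)
  then have "2*h + 2 \<le> k" using three_pow_ge[OF h] by simp
  have "(3::nat)^(2*h+2) < 7^(2*h+2)" by (intro power_strict_mono) auto
  also have "\<dots> \<le> 7^k" using \<open>2*h + 2 \<le> k\<close> by (intro power_increasing) auto
  finally show False using b N by simp
qed

lemma partC:
  assumes p: "prime p" "p \<ge> 5"
  defines "q \<equiv> (3::nat)^p" and "s \<equiv> (3::nat)^((p+1) div 2)"
  shows "prime_set (q + 1) \<noteq> {2} \<and> prime_set (q - 1) \<noteq> {2}
       \<and> (7 dvd (q - s + 1) \<or> 7 dvd (q + s + 1))
       \<and> prime_set (q + s + 1) \<noteq> {7} \<and> prime_set (q - s + 1) \<noteq> {7}"
proof (intro conjI)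
  have op: "odd p" using prime5_mods[OF p] by simp
  have p3: "p \<ge> 3" using p by simp
  obtain h where hp: "p = 2*h + 1" using op by (auto elim!: oddE)
  have h2: "h \<ge> 2" using hp p by simp
  have sdef: "s = 3^(h+1)" unfolding s_def using hp by simp
  have qdef: "q = 3^h * s" unfolding q_def sdef hp by (simp add: power_add[symmetric])
  have h1: "(3::nat)^h \<ge> 3" using power_increasing[of 1 h "3::nat"] h2 by simp
  have s3: "s \<ge> 3" unfolding sdef using h1 by simp
  have sq: "s < q" unfolding qdef using h1 s3 by simp
  have ss: "s * s = 3 * q" unfolding sdef qdef by (simp add: power_add)
  show "prime_set (q + 1) \<noteq> {2}"
  proof -
    obtain r where "prime r" "odd r" "r dvd q + 1" using plus_minus_one(1)[OF op p3] unfolding q_def by blast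
    then show ?thesis by (intro not_single[of r]) auto
  qed
  show "prime_set (q - 1) \<noteq> {2}"
  proof -
    obtain r where "prime r" "odd r" "r dvd q - 1" using plus_minus_one(2)[OF op p3] unfolding q_def by blast
    moreover have "q - 1 \<noteq> 0" using sq s3 by simp
    ultimately show ?thesis by (intro not_single[of r]) auto
  qed
  show "7 dvd (q - s + 1) \<or> 7 dvd (q + s + 1)"
  proof -
    have prod: "(q - s + 1) * (q + s + 1) + q = q * q + 1"
    proof -
      have ss': "int s * int s = 3 * int q" using ss by (metis of_nat_mult of_nat_numeral)
      have e1: "int (q - s + 1) = int q - int s + 1" using sq by (simp add: of_nat_diff)
      have e2: "int (q + s + 1) = int q + int s + 1" by simp
      have "int ((q - s + 1) * (q + s + 1) + q) = int (q - s + 1) * int (q + s + 1) + int q"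
        by (simp only: of_nat_add of_nat_mult)
      also have "\<dots> = (int q - int s + 1) * (int q + int s + 1) + int q" by (simp only: e1 e2)
      also have "\<dots> = int q * int q + 3 * int q + 1 - int s * int s" by (simp add: algebra_simps)
      also have "\<dots> = int q * int q + 1" using ss' by simp
      finally have "int ((q - s + 1) * (q + s + 1) + q) = int (q * q + 1)" by simp
      then show ?thesis by (simp only: of_nat_eq_iff)
    qed
    have m6: "p mod 6 = 1 \<or> p mod 6 = 5" using mod6[OF mod3p[OF p] op] .
    have per: "[q = 3^(p mod 6)] (mod 7)" unfolding q_def by (rule period) (simp add: cong_def)
    obtain c :: nat where c: "[q = c] (mod 7)" "[c * c + 1 = c] (mod 7)"
    proof (cases "p mod 6 = 1")
      case True then show ?thesis using that[of 3] per by (simp add: cong_def)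
    next
      case False then have "p mod 6 = 5" using m6 by simp
      then show ?thesis using that[of "3^5"] per by (simp add: cong_def)
    qed
    define X where "X = (q - s + 1) * (q + s + 1)"
    have "[X + q = q * q + 1] (mod 7)" using prod unfolding X_def by simp
    moreover have "[q * q + 1 = c * c + 1] (mod 7)" using c(1) by (intro cong_add cong_mult) auto
    moreover have "[X + q = X + c] (mod 7)" using c(1) by (intro cong_add) auto
    ultimately have "[X + c = c] (mod 7)" using c(2) cong_sym cong_trans by meson
    then have "[X + c = 0 + c] (mod 7)" by simp
    then have "[X = 0] (mod 7)" by (simp only: cong_add_rcancel_nat)
    then have "7 dvd X" by (simp add: cong_0_iff)
    then show ?thesis unfolding X_def using p7 prime_dvd_mult_iff by blast
  qed
  have sdq: "s dvd q" unfolding qdef by simp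
  have b3: "(3::nat)^(2*h+2) = 3 * q" unfolding q_def hp by simp
  have bound: "q + s + 1 \<le> 3^(2*h+2)" unfolding b3 using sq s3 by linarith
  have c1: "[q = 0] (mod s)" using sdq by (simp add: cong_0_iff)
  have c2: "[s = 0] (mod s)" by (simp add: cong_0_iff)
  have "[q + s = 0 + 0] (mod s)" using c1 c2 by (rule cong_add)
  then have "[q + s + 1 = 0 + 0 + 1] (mod s)" by (rule cong_add) (rule cong_refl)
  then have A1: "[q + s + 1 = 1] (mod 3^(h+1))" unfolding sdef by simp
  have A2: "q + s + 1 > 1" using s3 by simp
  show "prime_set (q + s + 1) \<noteq> {7}" by (rule notpow7[OF A2 A1 bound h2])
  have "s dvd q - s" using sdq by (simp add: dvd_diff_nat)
  then have "[q - s = 0] (mod s)" by (simp add: cong_0_iff)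
  then have "[q - s + 1 = 0 + 1] (mod s)" by (rule cong_add) (rule cong_refl)
  then have B1: "[q - s + 1 = 1] (mod 3^(h+1))" unfolding sdef by simp
  have B2: "q - s + 1 > 1" using sq by simp
  have B3: "q - s + 1 \<le> 3^(2*h+2)" using bound by linarith
  show "prime_set (q - s + 1) \<noteq> {7}" by (rule notpow7[OF B2 B1 B3 h2])
qed



lemma ge5: fixes p m :: nat assumes "prime p" "p dvd m" "odd m" "\<not> 3 dvd m" shows "p \<ge> 5"
proof -
  have "odd p"
  proof
    assume "even p"
    then have "2 dvd m" using assms(2) by (rule dvd_trans)
    then show False using assms(3) by simp
  qed
  moreover have "p \<noteq> 3" using assms(2,4) by auto
  moreover have "p \<ge> 2" using assms prime_ge_2_nat by blast
  ultimately have "p \<noteq> 2" "p \<noteq> 4" "p \<noteq> 3" "p \<ge> 2" by auto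
  then show ?thesis by linarith
qed

lemma partD:
  assumes k: "k \<ge> 1" and m: "m > 3" "odd m"
    and sub: "prime_set (ree_order (3 ^ m)) \<subseteq> prime_set (\<Prod>j=1..k. ree_order (qq j))"
  shows "m \<in> pp ` {1..k}"
proof (rule ccontr)
  assume nm: "m \<notin> pp ` {1..k}"
  have ppj: "prime (pp j) \<and> pp j \<ge> 5" if "j \<in> {1..k}" for j using that pp_prime pp_ge5 by auto
  have K: "\<exists>j\<in>{1..k}. r dvd 3^(6 * pp j) - 1" if r: "prime r" "r dvd ree_order (3^m)" "r \<noteq> 3" for r
  proof -
    have "ree_order (3^m) \<noteq> 0" using ree_pos[of m] m by simp
    then have "r \<in> prime_set (ree_order (3^m))" using r by (simp add: in_prime_factors_iff)
    then have "r dvd (\<Prod>j=1..k. ree_order (qq j))" using sub by (auto simp: in_prime_factors_iff)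
    then obtain j where j: "j \<in> {1..k}" "r dvd ree_order (qq j)" using prime_dvd_prod_iff[OF finite_atLeastAtMost r(1), of "\<lambda>j. ree_order (qq j)" 1 k] by blast
    have "r dvd ree_order (3^(pp j))" using j(2) unfolding qq_def .
    then have "r dvd 3^(6 * pp j) - 1" using ree_dvd[OF r(1) r(3)] by blast
    then show ?thesis using j by blast
  qed
  show False
  proof (cases "3 dvd m")
    case True
    have "19 dvd ree_order (3^m)" using dvd19[OF m(2) True] .
    moreover have "(19::nat) \<noteq> 3" by simp
    ultimately obtain j where j: "j \<in> {1..k}" "19 dvd (3::nat)^(6 * pp j) - 1" using K[OF p19] by blast
    have "prime (pp j)" "pp j \<ge> 5" using ppj[OF j(1)] by auto
    then show False using not19[of "pp j"] j(2) by blast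
  next
    case n3: False
    show False
    proof (cases "prime m")
      case True
      have m3: "m \<ge> 3" using m by simp
      obtain r where r: "prime r" "odd r" "r dvd (3::nat)^m - 1" using plus_minus_one(2)[OF m(2) m3] by blast
      have r3: "r \<noteq> 3" using r(3) three_ndvd[of m] m by auto
      have "r dvd ree_order (3^m)" using r(3) dvd_ree1 dvd_trans by blast
      then obtain j where j: "j \<in> {1..k}" "r dvd (3::nat)^(6 * pp j) - 1" using K[OF r(1) _ r3] by blast
      have g: "r dvd 3^(gcd m (6 * pp j)) - 1" using G[OF r(1) r3 r(3) j(2)] .
      have "\<not> m dvd 6 * pp j"
      proof
        assume "m dvd 6 * pp j"
        then have "m dvd 6 \<or> m dvd pp j" using prime_dvd_mult_iff[OF True] by blast
        moreover have "\<not> m dvd 6"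
        proof
          assume "m dvd 6"
          then have "m dvd 2 * 3" by simp
          then have "m dvd 2 \<or> m dvd 3" using prime_dvd_mult_iff[OF True] by blast
          then show False using m by (auto dest: dvd_imp_le)
        qed
        moreover have "m \<noteq> pp j" using nm j by blast
        ultimately show False using primes_dvd_imp_eq[OF True] ppj[OF j(1)] by blast
      qed
      then have "coprime m (6 * pp j)" using prime_imp_coprime[OF True] by blast
      then have "gcd m (6 * pp j) = 1" by simp
      then have "r dvd 2" using g by simp
      then have "r \<le> 2" by (rule dvd_imp_le) simp
      then show False using r prime_ge_2_nat[OF r(1)] by (cases "r = 2") auto
    next
      case False
      have "m \<noteq> 1" using m by simp
      then obtain p where p: "prime p" "p dvd m" using prime_factor_nat by blast
      then obtain t where t: "m = p * t" by blast
      have "t \<noteq> 1" using t p False by auto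
      then obtain p' where p': "prime p'" "p' dvd t" using prime_factor_nat by blast
      have p'm: "p' dvd m" using t p' by simp
      have p5: "p \<ge> 5" using ge5[OF p m(2) n3] .
      have p'5: "p' \<ge> 5" using ge5[OF p'(1) p'm m(2) n3] .
      have dm: "p * p' dvd m" using t p' by (simp add: mult_dvd_mono)
      obtain r where r: "prime r" "r dvd (3::nat)^(p*p') - 1" "\<not> r dvd 3^p - 1" "\<not> r dvd 3^p' - 1"
        using Z[OF p(1) p5 p'(1) p'5] by blast
      have "r dvd (3::nat)^m - 1" using r(2) pm1_dvd[OF dm] dvd_trans by blast
      then have rr: "r dvd ree_order (3^m)" using dvd_ree1 dvd_trans by blast
      have "p * p' \<ge> 1" using prime_gt_0_nat[OF p(1)] prime_gt_0_nat[OF p'(1)] by simp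
      then have r3: "r \<noteq> 3" using r(2) three_ndvd[of "p*p'"] by auto
      obtain j where j: "j \<in> {1..k}" "r dvd (3::nat)^(6 * pp j) - 1" using K[OF r(1) rr r3] by blast
      define g where "g = gcd (p*p') (6 * pp j)"
      have g: "r dvd 3^g - 1" unfolding g_def using G[OF r(1) r3 r(2) j(2)] .
      have cp: "coprime (p*p') 6"
      proof -
        have "odd p" "odd p'" using p p' m(2) p'm dvd_trans by blast+
        moreover have "\<not> 3 dvd p" "\<not> 3 dvd p'" using p p'm n3 dvd_trans by blast+
        then have "coprime 3 p" "coprime 3 p'" using prime_imp_coprime[OF p3] by auto
        ultimately have "coprime (2*3::nat) p" "coprime (2*3::nat) p'" unfolding coprime_mult_left_iff by simp_all
        then have "coprime (6::nat) p" "coprime (6::nat) p'" by simp_all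
        then show ?thesis by (simp add: coprime_commute)
      qed
      have "coprime g 6" using coprime_divisors[of g "p*p'" 6 6] cp unfolding g_def by simp
      moreover have "g dvd 6 * pp j" unfolding g_def by simp
      ultimately have "g dvd pp j" using coprime_dvd_mult_right_iff by blast
      then have "g = 1 \<or> g = pp j" using ppj[OF j(1)] by (simp add: prime_nat_iff)
      then have "g dvd p \<or> g dvd p'"
      proof
        assume "g = pp j"
        moreover have "g dvd p * p'" unfolding g_def by simp
        ultimately have "pp j dvd p \<or> pp j dvd p'" using prime_dvd_mult_iff ppj[OF j(1)] by blast
        then show ?thesis using primes_dvd_imp_eq ppj[OF j(1)] p p' \<open>g = pp j\<close> by blast
      qed simp
      then have "r dvd 3^p - 1 \<or> r dvd 3^p' - 1" using g pm1_dvd dvd_trans by blast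
      then show False using r by blast
    qed
  qed
qed



theorem lemma2p1:
  fixes i :: nat
  assumes "i \<ge> 1"
  shows "(\<forall>j\<ge>1. j \<noteq> i \<longrightarrow>
            prime_set (ree_order (qq i)) \<inter> prime_set (ree_order (qq j)) = {2, 3, 7})
       \<and> (\<forall>j\<ge>1. pp i \<notin> prime_set (ree_order (qq j)) \<and> 5 \<notin> prime_set (ree_order (qq j)))
       \<and> prime_set (qq i + 1) \<noteq> {2} \<and> prime_set (qq i - 1) \<noteq> {2}
       \<and> (7 dvd (qq i - sq3q i + 1) \<or> 7 dvd (qq i + sq3q i + 1))
       \<and> prime_set (qq i + sq3q i + 1) \<noteq> {7} \<and> prime_set (qq i - sq3q i + 1) \<noteq> {7}
       \<and> (\<forall>k\<ge>1. \<forall>m::nat. m > 3 \<and> odd m \<and>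
            prime_set (ree_order (3 ^ m)) \<subseteq> prime_set (\<Prod>j=1..k. ree_order (qq j))
            \<longrightarrow> m \<in> pp ` {1..k})"
proof (intro conjI allI impI)
  have pi: "prime (pp i)" "pp i \<ge> 5" using pp_prime pp_ge5 assms by auto
  fix j :: nat assume j: "j \<ge> 1" "j \<noteq> i"
  have pj: "prime (pp j)" "pp j \<ge> 5" using pp_prime pp_ge5 j by auto
  have "pp i \<noteq> pp j"
  proof (cases "i < j")
    case True then show ?thesis using pp_mono[of i j] assms by simp
  next
    case False then show ?thesis using pp_mono[of j i] j by simp
  qed
  then show "prime_set (ree_order (qq i)) \<inter> prime_set (ree_order (qq j)) = {2, 3, 7}"
    unfolding qq_def using partA[OF pi pj] by blast
next
  fix j :: nat assume j: "j \<ge> 1"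
  show "pp i \<notin> prime_set (ree_order (qq j))"
    unfolding qq_def using partB[OF assms j] by (simp add: in_prime_factors_iff)
next
  fix j :: nat assume j: "j \<ge> 1"
  have pj: "prime (pp j)" "pp j \<ge> 5" using pp_prime pp_ge5 j by auto
  show "5 \<notin> prime_set (ree_order (qq j))"
    unfolding qq_def using not5[OF pj] by (simp add: in_prime_factors_iff)
next
  have pi: "prime (pp i)" "pp i \<ge> 5" using pp_prime pp_ge5 assms by auto
  note C = partC[OF pi, folded qq_def sq3q_def]
  show "prime_set (qq i + 1) \<noteq> {2}" using C by blast
  show "prime_set (qq i - 1) \<noteq> {2}" using C by blast
  show "7 dvd (qq i - sq3q i + 1) \<or> 7 dvd (qq i + sq3q i + 1)" using C by blast
  show "prime_set (qq i + sq3q i + 1) \<noteq> {7}" using C by blast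
  show "prime_set (qq i - sq3q i + 1) \<noteq> {7}" using C by blast
next
  fix k m :: nat
  assume "k \<ge> 1" "3 < m \<and> odd m \<and> prime_set (ree_order (3 ^ m)) \<subseteq> prime_set (\<Prod>j=1..k. ree_order (qq j))"
  then show "m \<in> pp ` {1..k}" using partD by blast
qed

end
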